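(* Let $\mathcal{G}$ be a network with non-monitor set $N$ and set of measurement paths $P$, and let $S\subseteq N$ be nonempty. Then $\Omega(S)=\min_{v\in S}\Omega(v)$.
   Context: $\mathcal{G}$ is a finite connected undirected graph whose node set is partitioned into monitors $M$ and non-monitors $N$; $P$ is an arbitrary set of measurement paths (each a sequence of nodes of $\mathcal{G}$). A failure set is any $F\subseteq N$; a path fails iff it traverses a node of $F$. $P_F$ is the set of paths in $P$ traversing at least one node of $F$; $F_1,F_2$ are distinguishable iff $P_{F_1}\ne P_{F_2}$. For $S\subseteq N$ and integer $k\ge0$, $S$ is $k$-identifiable if any two failure sets $F_1,F_2$ with $|F_1|,|F_2|\le k$ and $F_1\cap S\ne F_2\cap S$ are distinguishable. $\Omega(S)$ is the maximum $k\in\{0,\dots,|N|\}$ such that $S$ is $k$-identifiable, and $\Omega(v):=\Omega(\{v\})$. *)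

theory Defs
  imports Main
begin

definition network :: "'a set \<Rightarrow> 'a rel \<Rightarrow> 'a set \<Rightarrow> 'a set \<Rightarrow> 'a list set \<Rightarrow> bool" where
  "network V E M N P \<longleftrightarrow>
     finite V \<and> E \<subseteq> V \<times> V \<and> sym E \<and>
     (\<forall>u\<in>V. \<forall>v\<in>V. (u, v) \<in> E\<^sup>*) \<and>
     M \<union> N = V \<and> M \<inter> N = {} \<and>
     (\<forall>p\<in>P. set p \<subseteq> V)"

definition failed_paths :: "'a list set \<Rightarrow> 'a set \<Rightarrow> 'a list set" where
  "failed_paths P F = {p \<in> P. \<exists>v\<in>set p. v \<in> F}"

definition distinguishable :: "'a list set \<Rightarrow> 'a set \<Rightarrow> 'a set \<Rightarrow> bool" where
  "distinguishable P F1 F2 \<longleftrightarrow> failed_paths P F1 \<noteq> failed_paths P F2"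

definition k_identifiable :: "'a set \<Rightarrow> 'a list set \<Rightarrow> 'a set \<Rightarrow> nat \<Rightarrow> bool" where
  "k_identifiable N P S k \<longleftrightarrow>
     (\<forall>F1 F2. F1 \<subseteq> N \<longrightarrow> F2 \<subseteq> N \<longrightarrow> card F1 \<le> k \<longrightarrow> card F2 \<le> k \<longrightarrow>
        F1 \<inter> S \<noteq> F2 \<inter> S \<longrightarrow> distinguishable P F1 F2)"

definition Omega :: "'a set \<Rightarrow> 'a list set \<Rightarrow> 'a set \<Rightarrow> nat" where
  "Omega N P S = Max {k. k \<le> card N \<and> k_identifiable N P S k}"

end

theory Submission
  imports Defs
begin

lemma kid_mono: "k_identifiable N P S k \<Longrightarrow> j \<le> k \<Longrightarrow> k_identifiable N P S j"
  unfolding k_identifiable_def by (meson le_trans)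

lemma kid_pointwise:
  "k_identifiable N P S k \<longleftrightarrow> (\<forall>v\<in>S. k_identifiable N P {v} k)"
  unfolding k_identifiable_def by blast

lemma kid_zero: "finite N \<Longrightarrow> k_identifiable N P S 0"
  unfolding k_identifiable_def by (auto dest: finite_subset)

lemma Omega_in:
  assumes "finite N"
  shows "Omega N P S \<le> card N \<and> k_identifiable N P S (Omega N P S)"
proof -
  have "Omega N P S \<in> {k. k \<le> card N \<and> k_identifiable N P S k}"
    unfolding Omega_def
    by (rule Max_in) (auto intro: kid_zero[OF assms])
  thus ?thesis by simp
qed

lemma Omega_ge:
  "k \<le> card N \<Longrightarrow> k_identifiable N P S k \<Longrightarrow> k \<le> Omega N P S"
  unfolding Omega_def by (rule Max_ge) auto

theorem proposition1:
  fixes V M N :: "'a set" and E :: "'a rel" and P :: "'a list set" and S :: "'a set"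
  assumes "network V E M N P"
    and "S \<subseteq> N" and "S \<noteq> {}"
  shows "Omega N P S = Min ((\<lambda>v. Omega N P {v}) ` S)"
proof -
  have fN: "finite N" using assms(1) unfolding network_def by (metis finite_Un)
  have fS: "finite S" using fN assms(2) finite_subset by blast
  define m where "m = Min ((\<lambda>v. Omega N P {v}) ` S)"
  have mle: "\<And>v. v \<in> S \<Longrightarrow> m \<le> Omega N P {v}"
    unfolding m_def using fS by (simp add: Min_le)
  obtain v0 where "v0 \<in> S" using assms(3) by blast
  have mN: "m \<le> card N" using mle[OF \<open>v0 \<in> S\<close>] Omega_in[OF fN, of P "{v0}"] by linarith
  have "k_identifiable N P S m"
    unfolding kid_pointwise[of N P S m]
  proof
    fix v assume v: "v \<in> S"
    have "k_identifiable N P {v} (Omega N P {v})" using Omega_in[OF fN] by blast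
    thus "k_identifiable N P {v} m" using kid_mono mle[OF v] by metis
  qed
  hence 1: "m \<le> Omega N P S" using Omega_ge mN by blast
  have "\<And>v. v \<in> S \<Longrightarrow> Omega N P S \<le> Omega N P {v}"
  proof -
    fix v assume "v \<in> S"
    have "k_identifiable N P {v} (Omega N P S)"
      using Omega_in[OF fN, of P S] kid_pointwise[of N P S] \<open>v \<in> S\<close> by simp
    thus "Omega N P S \<le> Omega N P {v}" using Omega_ge[of "Omega N P S" N P "{v}"] Omega_in[OF fN, of P S] by simp
  qed
  hence "Omega N P S \<le> m" unfolding m_def using fS assms(3) by simp
  with 1 show ?thesis unfolding m_def by simp
qed

end
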